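(* Let $0<\alpha<\pi$, let $z\in\mathbb D$, and let $\Omega_j=\omega(z,I_j,\mathbb D)$, $j=1,2,3,4$, where $I_1=(0,\alpha)$, $I_2=(\alpha,\pi)$, $I_3=(\pi,\pi+\alpha)$, $I_4=(\pi+\alpha,2\pi)$ (arcs of the unit circle given by argument ranges). Then \[ \frac{\sin(\pi\Omega_1)\sin(\pi\Omega_3)}{\sin(\pi\Omega_2)\sin(\pi\Omega_4)}=\tan^2\frac{\alpha}{2}. \] Equivalently, with $U=\Omega_1+\Omega_3$, $V=\Omega_1-\Omega_3$, $T=\Omega_4-\Omega_2$, \[ \frac{\sin\frac\pi2(U+V)\,\sin\frac\pi2(U-V)}{\sin\frac\pi2(1-U-T)\,\sin\frac\pi2(1-U+T)}=\tan^2\frac\alpha2 . \]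
   Context: $\mathbb D$ is the open unit disk and $\omega(z,I,\mathbb D)$ denotes the harmonic measure at $z$ of the boundary arc $I\subset\partial\mathbb D$ with respect to $\mathbb D$ (the Poisson integral of the indicator function of $I$). *)

theory Defs
  imports "HOL-Analysis.Analysis"
begin

definition poisson_kernel :: "complex \<Rightarrow> real \<Rightarrow> real" where
  "poisson_kernel z t = (1 - (cmod z)^2) / (cmod (cis t - z))^2"

definition harmonic_measure_disk :: "complex \<Rightarrow> complex set \<Rightarrow> real" where
  "harmonic_measure_disk z I =
     (1 / (2 * pi)) * integral {0..2*pi} (\<lambda>t. poisson_kernel z t * indicator I (cis t))"

definition circle_arc :: "real \<Rightarrow> real \<Rightarrow> complex set" where
  "circle_arc a b = cis ` {a<..<b}"

end

theory Submission
  imports Defs "HOL-Complex_Analysis.Complex_Analysis"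
begin

lemma cis_ne: "cmod z < 1 \<Longrightarrow> cis t \<noteq> z"
  by auto

lemma kernel_eq:
  assumes "cmod z < 1"
  shows "poisson_kernel z t = 2 * Im (\<i> * cis t / (cis t - z)) - 1"
proof -
  have ne: "cis t - z \<noteq> 0" using cis_ne[OF assms] by auto
  obtain x y where z: "z = Complex x y" by (cases z)
  have d: "(cos t - x)^2 + (sin t - y)^2 \<noteq> 0"
    using ne by (simp add: z complex_eq_iff)
  have "poisson_kernel z t = (1 - x^2 - y^2) / ((cos t - x)^2 + (sin t - y)^2)"
    unfolding poisson_kernel_def by (simp add: z cmod_def cis.code)
  moreover have "Im (\<i> * cis t / (cis t - z)) = (cos t * (cos t - x) + sin t * (sin t - y)) / ((cos t - x)^2 + (sin t - y)^2)"
  proof -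
    have "Im (\<i> * cis t / (cis t - z)) = Re (cis t / (cis t - z))"
      by (metis Im_i_times times_divide_eq_right)
    also have "\<dots> = (cos t * (cos t - x) + sin t * (sin t - y)) / ((cos t - x)^2 + (sin t - y)^2)"
      by (simp add: Re_divide z cis.code)
    finally show ?thesis .
  qed
  moreover have "2 * (cos t * (cos t - x) + sin t * (sin t - y)) - ((cos t - x)^2 + (sin t - y)^2) = 1 - x^2 - y^2"
    using sin_cos_squared_add[of t] by (simp add: power2_eq_square algebra_simps)
  ultimately show ?thesis using d
    by (metis (no_types, lifting) add_divide_distrib diff_divide_distrib divide_self times_divide_eq_right)
qed

lemma cis_inj_aux:
  assumes "0 \<le> t" "t \<le> 2*pi" "0 < s" "s < 2*pi" "cis t = cis s"
  shows "t = s"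
proof -
  have "cis (t - s) = 1"
    using assms(5) by (simp add: cis_divide[symmetric])
  then have "exp (\<i> * complex_of_real (t - s)) = 1"
    by (simp add: cis_conv_exp)
  then obtain n :: int where "t - s = 2 * pi * n"
    unfolding exp_eq_1 by auto
  moreover have "-2*pi < t - s" "t - s < 2*pi" using assms by auto
  ultimately have "pi * (-1) < pi * real_of_int n" "pi * real_of_int n < pi * 1" by auto
  then have "-1 < real_of_int n" "real_of_int n < 1"
    using mult_less_cancel_left_pos[OF pi_gt_zero] by blast+
  then have "n = 0" by linarith
  then show ?thesis using \<open>t - s = 2 * pi * n\<close> by simp
qed

lemma hm_arc:
  assumes "0 \<le> a" "a < b" "b \<le> 2*pi"
  shows "harmonic_measure_disk z (circle_arc a b) = 1/(2*pi) * integral {a..b} (poisson_kernel z)"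
proof -
  have "integral {0..2*pi} (\<lambda>t. poisson_kernel z t * indicator (circle_arc a b) (cis t))
      = integral {0..2*pi} (\<lambda>t. if t \<in> {a<..<b} then poisson_kernel z t else 0)"
  proof (rule integral_cong)
    fix t assume t: "t \<in> {0..2*pi}"
    have "cis t \<in> circle_arc a b \<longleftrightarrow> t \<in> {a<..<b}"
    proof
      assume "cis t \<in> circle_arc a b"
      then obtain s where s: "s \<in> {a<..<b}" "cis t = cis s" unfolding circle_arc_def by auto
      then have "t = s" using cis_inj_aux[of t s] t assms by auto
      then show "t \<in> {a<..<b}" using s by simp
    qed (auto simp: circle_arc_def)
    then show "poisson_kernel z t * indicator (circle_arc a b) (cis t) = (if t \<in> {a<..<b} then poisson_kernel z t else 0)"
      by (simp add: indicator_def)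
  qed
  also have "\<dots> = integral ({a<..<b} \<inter> {0..2*pi}) (poisson_kernel z)"
    by (rule integral_restrict_Int)
  also have "{a<..<b} \<inter> {0..2*pi} = {a<..<b}" using assms by auto
  also have "integral {a<..<b} (poisson_kernel z) = integral {a..b} (poisson_kernel z)"
    by (simp add: integral_open_interval_real)
  finally show ?thesis unfolding harmonic_measure_disk_def by simp
qed

lemma arc_integral:
  assumes "cmod z < 1" "a < b"
  shows "((\<lambda>t. \<i> * cis t / (cis t - z)) has_integral contour_integral (part_circlepath 0 1 a b) (\<lambda>w. 1/(w-z))) {a..b}"
    and "exp (- contour_integral (part_circlepath 0 1 a b) (\<lambda>w. 1/(w-z))) * (cis b - z) = cis a - z"
proof -
  let ?g = "\<lambda>t. \<i> * cis t / (cis t - z)"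
  have "continuous_on {a..b} ?g"
    using cis_ne[OF assms(1)] by (intro continuous_intros) auto
  then have "?g integrable_on {a..b}" by (rule integrable_continuous_interval)
  then have "(?g has_integral integral {a..b} ?g) {a..b}" by blast
  then have "((\<lambda>t. (\<lambda>w. 1/(w-z)) (0 + 1 * cis t) * 1 * \<i> * cis t) has_integral integral {a..b} ?g) {a..b}"
    by simp
  then have "((\<lambda>w. 1/(w-z)) has_contour_integral integral {a..b} ?g) (part_circlepath 0 1 a b)"
    using has_contour_integral_part_circlepath_iff[OF assms(2), of "\<lambda>w. 1/(w-z)" _ 0 1] by (simp only: of_real_1)
  then have eq: "contour_integral (part_circlepath 0 1 a b) (\<lambda>w. 1/(w-z)) = integral {a..b} ?g"
    by (rule contour_integral_unique)
  show "(?g has_integral contour_integral (part_circlepath 0 1 a b) (\<lambda>w. 1/(w-z))) {a..b}"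
    using \<open>?g integrable_on {a..b}\<close> eq by (simp add: has_integral_integral)
  let ?\<gamma> = "part_circlepath 0 1 a b"
  have v: "?\<gamma> piecewise_C1_differentiable_on {0..1}"
    using valid_path_part_circlepath unfolding valid_path_def by blast
  have "cmod (?\<gamma> x) = 1" for x
    unfolding part_circlepath_def by (simp only: add_0_left of_real_1 mult_1 norm_exp_i_times)
  then have nz: "z \<notin> ?\<gamma> ` {0..1}"
    using assms(1) by force
  have "exp (- integral {0..1} (\<lambda>x. vector_derivative ?\<gamma> (at x) / (?\<gamma> x - z))) * (?\<gamma> 1 - z) = ?\<gamma> 0 - z"
    by (rule winding_number_exp_integral(2)[OF v _ nz]) simp
  moreover have "integral {0..1} (\<lambda>x. vector_derivative ?\<gamma> (at x) / (?\<gamma> x - z)) = contour_integral ?\<gamma> (\<lambda>w. 1/(w-z))"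
    by (simp add: contour_integral_integral)
  moreover have "?\<gamma> 1 = cis b" "?\<gamma> 0 = cis a"
    using pathfinish_part_circlepath[of 0 1 a b] pathstart_part_circlepath[of 0 1 a b]
    by (simp_all only: pathfinish_def pathstart_def cis_conv_exp add_0_left of_real_1 mult_1)
  ultimately show "exp (- contour_integral (part_circlepath 0 1 a b) (\<lambda>w. 1/(w-z))) * (cis b - z) = cis a - z"
    by simp
qed

lemma key_im:
  "Im ((cis b - z) * cnj (cis a - z) * cis (-((b-a)/2))) = sin ((b-a)/2) * (1 - (cmod z)^2)"
proof -
  obtain x y where z: "z = Complex x y" by (cases z)
  define m where "m = (a+b)/2"
  define h where "h = (b-a)/2"
  have b: "b = m + h" and a: "a = m - h" unfolding m_def h_def by (simp_all add: field_simps)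
  have cb: "cos b = cos m * cos h - sin m * sin h" and sb: "sin b = sin m * cos h + cos m * sin h"
    unfolding b by (simp_all add: cos_add sin_add)
  have ca: "cos a = cos m * cos h + sin m * sin h" and sa: "sin a = sin m * cos h - cos m * sin h"
    unfolding a by (simp_all add: cos_diff sin_diff)
  have e1: "(sin m)^2 + (cos m)^2 = 1" and e2: "(sin h)^2 + (cos h)^2 = 1" by simp_all
  have "Im ((cis b - z) * cnj (cis a - z) * cis (-h))
     = ((sin b - y) * (cos a - x) - (cos b - x) * (sin a - y)) * cos h - ((cos b - x) * (cos a - x) + (sin b - y) * (sin a - y)) * sin h"
    by (simp add: z cis.code algebra_simps)
  also have "\<dots> = sin h * (1 - (x^2 + y^2))"
    unfolding ca sa cb sb using e1 e2 by algebra
  finally show ?thesis by (simp add: h_def z cmod_power2)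
qed

lemma arc_main:
  assumes z1: "cmod z < 1" and ab: "0 \<le> a" "a < b" "b \<le> 2*pi"
  defines "I \<equiv> contour_integral (part_circlepath 0 1 a b) (\<lambda>w. 1/(w-z))"
  shows "pi * harmonic_measure_disk z (circle_arc a b) = Im I - (b-a)/2"
    and "sin (pi * harmonic_measure_disk z (circle_arc a b))
          = sin ((b-a)/2) * (1 - (cmod z)^2) / (cmod (cis a - z) * cmod (cis b - z))"
proof -
  let ?g = "\<lambda>t. \<i> * cis t / (cis t - z)"
  have gI: "(?g has_integral I) {a..b}" unfolding I_def by (rule arc_integral(1)[OF z1 ab(2)])
  have kf: "poisson_kernel z = (\<lambda>t. 2 * Im (?g t) - 1)" using kernel_eq[OF z1] by (intro ext)
  have "((\<lambda>t. 2 * Im (?g t) - 1) has_integral (2 * Im I - 1 * (b - a))) {a..b}"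
    using has_integral_diff[OF has_integral_mult_right[OF has_integral_Im[OF gI], of 2]
        has_integral_const_real[of 1 a b]] ab by simp
  then have "(poisson_kernel z has_integral (2 * Im I - (b - a))) {a..b}"
    by (simp only: kf mult_1)
  then have "integral {a..b} (poisson_kernel z) = 2 * Im I - (b - a)"
    by (rule integral_unique)
  then show hm: "pi * harmonic_measure_disk z (circle_arc a b) = Im I - (b-a)/2"
    using hm_arc[OF ab] by (simp add: field_simps)
  define wa where "wa = cis a - z"
  define wb where "wb = cis b - z"
  have wa0: "wa \<noteq> 0" and wb0: "wb \<noteq> 0" using cis_ne[OF z1] by (auto simp: wa_def wb_def)
  have E: "exp (- I) * wb = wa" unfolding I_def wa_def wb_def by (rule arc_integral(2)[OF z1 ab(2)])
  define e where "e = exp (- Re I)"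
  have ep: "e > 0" by (simp add: e_def)
  have E2: "of_real e * cis (- Im I) * wb = wa"
    using E by (simp add: e_def exp_eq_polar)
  then have "e * cmod wb = cmod wa"
    by (metis norm_mult norm_of_real norm_cis mult.right_neutral abs_of_pos ep)
  have "cis (Im I) * wa = of_real e * wb"
    using E2 by (metis (no_types, lifting) cis_mult mult.assoc mult.left_commute add.right_inverse cis_zero mult_1)
  then have "cis (Im I) * wa * cnj wa = of_real e * wb * cnj wa" by simp
  then have "cis (Im I) * of_real ((cmod wa)^2) = of_real e * wb * cnj wa"
    by (metis mult.assoc complex_norm_square of_real_power)
  then have "of_real e * (cis (Im I) * of_real (cmod wa * cmod wb)) = of_real e * (wb * cnj wa)"
    using \<open>e * cmod wb = cmod wa\<close>[symmetric]
    by (simp add: power2_eq_square algebra_simps)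
  then have "cis (Im I) * of_real (cmod wa * cmod wb) = wb * cnj wa"
    using ep by simp
  then have ciY: "cis (Im I) = wb * cnj wa / of_real (cmod wa * cmod wb)"
    using wa0 wb0 by (simp add: field_simps)
  have "sin (pi * harmonic_measure_disk z (circle_arc a b)) = Im (cis (Im I - (b-a)/2))"
    using hm by simp
  also have "cis (Im I - (b-a)/2) = cis (Im I) * cis (-((b-a)/2))"
    by (simp add: cis_mult)
  also have "\<dots> = wb * cnj wa * cis (-((b-a)/2)) / of_real (cmod wa * cmod wb)"
    by (simp add: ciY)
  also have "Im \<dots> = Im (wb * cnj wa * cis (-((b-a)/2))) / (cmod wa * cmod wb)"
    by (rule Im_divide_of_real)
  also have "Im (wb * cnj wa * cis (-((b-a)/2))) = sin ((b-a)/2) * (1 - (cmod z)^2)"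
    unfolding wa_def wb_def by (rule key_im)
  finally show "sin (pi * harmonic_measure_disk z (circle_arc a b))
          = sin ((b-a)/2) * (1 - (cmod z)^2) / (cmod (cis a - z) * cmod (cis b - z))"
    by (simp add: wa_def wb_def)
qed

lemma total_integral:
  assumes z1: "cmod z < 1"
  shows "contour_integral (part_circlepath 0 1 0 (2*pi)) (\<lambda>w. 1/(w-z)) = 2 * pi * \<i>"
proof -
  have "((\<lambda>u. (\<lambda>_. 1::complex) u / (u - z)) has_contour_integral 2 * complex_of_real pi * \<i> * 1) (circlepath 0 1)"
    by (rule Cauchy_integral_circlepath_simple) (use z1 in auto)
  then show ?thesis unfolding circlepath_def by (simp add: contour_integral_unique)
qed

lemma sum_arcs:
  assumes z1: "cmod z < 1" and "0 < a" "a < b" "b < c" "c < 2*pi"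
  shows "contour_integral (part_circlepath 0 1 0 a) (\<lambda>w. 1/(w-z)) + contour_integral (part_circlepath 0 1 a b) (\<lambda>w. 1/(w-z))
       + contour_integral (part_circlepath 0 1 b c) (\<lambda>w. 1/(w-z)) + contour_integral (part_circlepath 0 1 c (2*pi)) (\<lambda>w. 1/(w-z))
       = 2 * pi * \<i>"
proof -
  let ?g = "\<lambda>t. \<i> * cis t / (cis t - z)"
  let ?C = "\<lambda>a b. contour_integral (part_circlepath 0 1 a b) (\<lambda>w. 1/(w-z))"
  have h1: "(?g has_integral ?C 0 a) {0..a}" by (rule arc_integral(1)) (use assms in auto)
  have h2: "(?g has_integral ?C a b) {a..b}" by (rule arc_integral(1)) (use assms in auto)
  have h3: "(?g has_integral ?C b c) {b..c}" by (rule arc_integral(1)) (use assms in auto)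
  have h4: "(?g has_integral ?C c (2*pi)) {c..2*pi}" by (rule arc_integral(1)) (use assms in auto)
  have ht: "(?g has_integral ?C 0 (2*pi)) {0..2*pi}" by (rule arc_integral(1)) (use assms in auto)
  have k1: "(?g has_integral ?C 0 a + ?C a b) {0..b}"
    by (rule has_integral_combine[OF _ _ h1 h2]) (use assms in auto)
  have k2: "(?g has_integral ?C 0 a + ?C a b + ?C b c) {0..c}"
    by (rule has_integral_combine[OF _ _ k1 h3]) (use assms in auto)
  have k3: "(?g has_integral ?C 0 a + ?C a b + ?C b c + ?C c (2*pi)) {0..2*pi}"
    by (rule has_integral_combine[OF _ _ k2 h4]) (use assms in auto)
  then have "?C 0 a + ?C a b + ?C b c + ?C c (2*pi) = ?C 0 (2*pi)"
    using ht has_integral_unique by blast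
  then show ?thesis using total_integral[OF z1] by simp
qed

theorem lemma3p1:
  fixes \<alpha> :: real and z :: complex
  assumes "0 < \<alpha>" and "\<alpha> < pi" and "cmod z < 1"
  defines "\<Omega>1 \<equiv> harmonic_measure_disk z (circle_arc 0 \<alpha>)"
      and "\<Omega>2 \<equiv> harmonic_measure_disk z (circle_arc \<alpha> pi)"
      and "\<Omega>3 \<equiv> harmonic_measure_disk z (circle_arc pi (pi + \<alpha>))"
      and "\<Omega>4 \<equiv> harmonic_measure_disk z (circle_arc (pi + \<alpha>) (2 * pi))"
  shows "(sin (pi * \<Omega>1) * sin (pi * \<Omega>3)) / (sin (pi * \<Omega>2) * sin (pi * \<Omega>4))
           = (tan (\<alpha> / 2))^2
         \<and> (let U = \<Omega>1 + \<Omega>3; V = \<Omega>1 - \<Omega>3; T = \<Omega>4 - \<Omega>2 in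
           (sin (pi / 2 * (U + V)) * sin (pi / 2 * (U - V)))
           / (sin (pi / 2 * (1 - U - T)) * sin (pi / 2 * (1 - U + T)))
           = (tan (\<alpha> / 2))^2)"
proof -
  let ?C = "\<lambda>a b. contour_integral (part_circlepath 0 1 a b) (\<lambda>w. 1/(w-z))"
  have z1: "cmod z < 1" by fact
  note A1 = arc_main[OF z1, of 0 \<alpha>, folded \<Omega>1_def]
  note A2 = arc_main[OF z1, of \<alpha> pi, folded \<Omega>2_def]
  note A3 = arc_main[OF z1, of pi "pi + \<alpha>", folded \<Omega>3_def]
  note A4 = arc_main[OF z1, of "pi + \<alpha>" "2*pi", folded \<Omega>4_def]
  have p1: "pi * \<Omega>1 = Im (?C 0 \<alpha>) - \<alpha>/2" using A1(1) assms by simp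
  have p2: "pi * \<Omega>2 = Im (?C \<alpha> pi) - (pi - \<alpha>)/2" using A2(1) assms by simp
  have p3: "pi * \<Omega>3 = Im (?C pi (pi + \<alpha>)) - \<alpha>/2" using A3(1) assms by simp
  have p4: "pi * \<Omega>4 = Im (?C (pi + \<alpha>) (2*pi)) - (pi - \<alpha>)/2" using A4(1) assms by simp
  have "Im (?C 0 \<alpha> + ?C \<alpha> pi + ?C pi (pi + \<alpha>) + ?C (pi + \<alpha>) (2*pi)) = 2 * pi"
    using sum_arcs[OF z1, of \<alpha> pi "pi + \<alpha>"] assms by simp
  then have "pi * \<Omega>1 + pi * \<Omega>2 + pi * \<Omega>3 + pi * \<Omega>4 = pi"
    using p1 p2 p3 p4 by simp
  then have "pi * (\<Omega>1 + \<Omega>2 + \<Omega>3 + \<Omega>4) = pi * 1"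
    by (simp add: distrib_left)
  then have S: "\<Omega>1 + \<Omega>2 + \<Omega>3 + \<Omega>4 = 1" by simp
  define k where "k = 1 - (cmod z)^2"
  define d0 where "d0 = cmod (cis 0 - z)"
  define d1 where "d1 = cmod (cis \<alpha> - z)"
  define d2 where "d2 = cmod (cis pi - z)"
  define d3 where "d3 = cmod (cis (pi + \<alpha>) - z)"
  have d0p: "d0 > 0" and d1p: "d1 > 0" and d2p: "d2 > 0" and d3p: "d3 > 0"
    unfolding d0_def d1_def d2_def d3_def using cis_ne[OF z1]
    by (metis zero_less_norm_iff right_minus_eq)+
  have kp: "k > 0" unfolding k_def using z1
    by (simp add: abs_square_less_1)
  have c2: "cos (\<alpha>/2) > 0" using assms by (intro cos_gt_zero) auto
  have s2: "sin (\<alpha>/2) > 0" using assms by (intro sin_gt_zero) auto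
  have e2: "sin ((pi - \<alpha>)/2) = cos (\<alpha>/2)"
    by (simp add: diff_divide_distrib sin_diff)
  have cis2: "cis (2*pi) = cis 0" by simp
  have q1: "sin (pi * \<Omega>1) = sin (\<alpha>/2) * k / (d0 * d1)"
    using A1(2) assms by (simp add: k_def d0_def d1_def)
  have q2: "sin (pi * \<Omega>2) = cos (\<alpha>/2) * k / (d1 * d2)"
    using A2(2) assms e2 by (simp add: k_def d1_def d2_def)
  have q3: "sin (pi * \<Omega>3) = sin (\<alpha>/2) * k / (d2 * d3)"
    using A3(2) assms by (simp add: k_def d2_def d3_def)
  have "sin (pi * \<Omega>4) = sin ((2*pi - (pi + \<alpha>))/2) * k / (d3 * d0)"
    using A4(2) assms by (simp only: k_def d3_def d0_def cis2)
  also have "(2*pi - (pi + \<alpha>))/2 = (pi - \<alpha>)/2" by simp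
  finally have q4: "sin (pi * \<Omega>4) = cos (\<alpha>/2) * k / (d3 * d0)" using e2 by simp
  have R: "(sin (pi * \<Omega>1) * sin (pi * \<Omega>3)) / (sin (pi * \<Omega>2) * sin (pi * \<Omega>4)) = (tan (\<alpha> / 2))^2"
  proof -
    define Q where "Q = k^2 / (d0*d1*d2*d3)"
    have Q0: "Q \<noteq> 0" unfolding Q_def using d0p d1p d2p d3p kp by simp
    have n: "sin (pi * \<Omega>1) * sin (pi * \<Omega>3) = (sin (\<alpha>/2))^2 * Q"
      unfolding q1 q3 Q_def by (simp add: power2_eq_square mult_ac)
    have d: "sin (pi * \<Omega>2) * sin (pi * \<Omega>4) = (cos (\<alpha>/2))^2 * Q"
      unfolding q2 q4 Q_def by (simp add: power2_eq_square mult_ac)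
    show ?thesis unfolding n d tan_def power_divide using Q0 by simp
  qed
  have eqs: "pi / 2 * ((\<Omega>1 + \<Omega>3) + (\<Omega>1 - \<Omega>3)) = pi * \<Omega>1"
    "pi / 2 * ((\<Omega>1 + \<Omega>3) - (\<Omega>1 - \<Omega>3)) = pi * \<Omega>3"
    "pi / 2 * (1 - (\<Omega>1 + \<Omega>3) - (\<Omega>4 - \<Omega>2)) = pi * \<Omega>2"
    "pi / 2 * (1 - (\<Omega>1 + \<Omega>3) + (\<Omega>4 - \<Omega>2)) = pi * \<Omega>4"
  proof -
    have "1 - (\<Omega>1 + \<Omega>3) - (\<Omega>4 - \<Omega>2) = 2 * \<Omega>2" "1 - (\<Omega>1 + \<Omega>3) + (\<Omega>4 - \<Omega>2) = 2 * \<Omega>4"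
      using S by linarith+
    then show "pi / 2 * (1 - (\<Omega>1 + \<Omega>3) - (\<Omega>4 - \<Omega>2)) = pi * \<Omega>2"
      "pi / 2 * (1 - (\<Omega>1 + \<Omega>3) + (\<Omega>4 - \<Omega>2)) = pi * \<Omega>4" by simp_all
  qed simp_all
  show ?thesis using R by (simp only: Let_def eqs R simp_thms)
qed

end
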